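(* Let $d\mu(x)=e^{-V(x)}\,dx$ be a probability measure on $\mathbb R$ with $V$ smooth and even. Assume that $V$ is concave on $(R,+\infty)$ for some $R>0$ and that $V''(x)/V'(x)^2\to r$ as $x\to\infty$ for some $r>-1/2$. Then there exist $S>R$ and $C>0$ such that for all smooth $g$, $$\mathrm{Var}_\mu(g)\le C\int|g'(x)|^2\Big(1+\frac{\mathbf 1_{|x|>S}}{V'(x)^2}\Big)d\mu(x),\qquad \int|g-m|\,d\mu\le C\int|g'(x)|\Big(1+\frac{\mathbf 1_{|x|>S}}{|V'(x)|}\Big)d\mu(x),$$ where $m$ is a median of $g$ under $\mu$. *)

theory Defs
  imports "HOL-Probability.Probability"
begin

definition smooth :: "(real \<Rightarrow> real) \<Rightarrow> bool" where
  "smooth f \<longleftrightarrow> (\<forall>n x. ((deriv ^^ n) f) differentiable (at x))"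

definition mu :: "(real \<Rightarrow> real) \<Rightarrow> real measure" where
  "mu V = density lborel (\<lambda>x. ennreal (exp (- V x)))"

definition is_median :: "real measure \<Rightarrow> (real \<Rightarrow> real) \<Rightarrow> real \<Rightarrow> bool" where
  "is_median M g m \<longleftrightarrow>
     measure M {x \<in> space M. g x \<le> m} \<ge> 1/2 \<and> measure M {x \<in> space M. g x \<ge> m} \<ge> 1/2"

text \<open>Variance as an extended nonnegative real (infinite when g is not square integrable).\<close>
definition Var :: "real measure \<Rightarrow> (real \<Rightarrow> real) \<Rightarrow> ennreal" where
  "Var M g = (\<integral>\<^sup>+ x. ennreal ((g x - (\<integral> y. g y \<partial>M))\<^sup>2) \<partial>M)"

end

theory Submission
  imports Defs
begin


lemma ftc_bound:
  fixes F F' p r :: "real \<Rightarrow> real"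
  assumes ab: "a \<le> b"
    and dF: "\<And>x. x \<in> {a..b} \<Longrightarrow> (F has_real_derivative F' x) (at x within {a..b})"
    and cp: "continuous_on {a..b} p" and cr: "continuous_on {a..b} r"
    and le: "\<And>x. x \<in> {a..b} \<Longrightarrow> p x \<le> r x - F' x"
  shows "integral {a..b} p \<le> integral {a..b} r + F a - F b"
proof -
  have "(F' has_integral (F b - F a)) {a..b}"
    by (rule fundamental_theorem_of_calculus[OF ab]) (use dF in \<open>simp add: has_real_derivative_iff_has_vector_derivative\<close>)
  moreover have "(r has_integral integral {a..b} r) {a..b}"
    using integrable_continuous_interval[OF cr] by (simp add: integrable_integral)
  ultimately have "((\<lambda>x. r x - F' x) has_integral (integral {a..b} r - (F b - F a))) {a..b}"
    by (intro has_integral_diff)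
  moreover have "(p has_integral integral {a..b} p) {a..b}"
    using integrable_continuous_interval[OF cp] by (simp add: integrable_integral)
  ultimately have "integral {a..b} p \<le> integral {a..b} r - (F b - F a)"
    using has_integral_le le by blast
  then show ?thesis by simp
qed

lemma nn_to_integral:
  fixes f :: "real \<Rightarrow> real"
  assumes "continuous_on {a..b} f" "\<And>x. x \<in> {a..b} \<Longrightarrow> f x \<ge> 0"
  shows "(\<integral>\<^sup>+x. ennreal (f x) * indicator {a..b} x \<partial>lborel) = ennreal (integral {a..b} f)"
  by (rule nn_integral_has_integral_lebesgue') (use assms integrable_continuous_interval[OF assms(1)] in \<open>auto simp: integrable_integral\<close>)

lemma integral_nonneg_cont:
  fixes f :: "real \<Rightarrow> real"
  assumes "continuous_on {a..b} f" "\<And>x. x \<in> {a..b} \<Longrightarrow> f x \<ge> 0"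
  shows "integral {a..b} f \<ge> 0"
  by (rule integral_nonneg) (use assms integrable_continuous_interval in auto)

lemma nn_bound_sup:
  fixes f :: "real \<Rightarrow> real"
  assumes cf: "continuous_on {a..} f" and nn: "\<And>x. x \<ge> a \<Longrightarrow> f x \<ge> 0" and aa: "a \<le> a'"
    and bd: "\<And>T. T \<ge> a' \<Longrightarrow> integral {a..T} f \<le> b"
  shows "(\<integral>\<^sup>+x. ennreal (f x) * indicator {a..} x \<partial>lborel) \<le> ennreal b"
proof -
  define fn where "fn n x = ennreal (f x) * indicator {a..a' + real n} x" for n x
  have meas: "fn n \<in> borel_measurable borel" for n
  proof -
    have "continuous_on {a..a' + real n} f" using cf by (rule continuous_on_subset) auto
    then have "(\<lambda>x. indicator {a..a' + real n} x *\<^sub>R f x) \<in> borel_measurable borel"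
      by (intro borel_measurable_continuous_on_indicator) auto
    then have "(\<lambda>x. ennreal (indicator {a..a' + real n} x *\<^sub>R f x)) \<in> borel_measurable borel"
      by measurable
    moreover have "ennreal (indicator {a..a' + real n} x *\<^sub>R f x) = fn n x" for x
      by (auto simp: fn_def indicator_def)
    ultimately show ?thesis by simp
  qed
  have inc: "incseq fn"
    by (auto simp: incseq_def le_fun_def fn_def indicator_def)
  have sup: "(SUP n. fn n x) = ennreal (f x) * indicator {a..} x" for x
  proof (cases "x \<ge> a")
    case True
    obtain n :: nat where "x - a' \<le> real n" using real_arch_simple by blast
    then have "fn n x = ennreal (f x)" using True by (auto simp: fn_def)
    moreover have "fn m x \<le> ennreal (f x)" for m by (auto simp: fn_def indicator_def)
    ultimately have "(SUP n. fn n x) = ennreal (f x)"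
      by (intro antisym SUP_least) (auto intro: SUP_upper2[of n])
    then show ?thesis using True by simp
  next
    case False then show ?thesis by (simp add: fn_def)
  qed
  have "(\<integral>\<^sup>+x. ennreal (f x) * indicator {a..} x \<partial>lborel) = (\<integral>\<^sup>+x. (SUP n. fn n x) \<partial>lborel)"
    by (simp add: sup)
  also have "\<dots> = (SUP n. integral\<^sup>N lborel (fn n))"
    by (rule nn_integral_monotone_convergence_SUP[OF inc]) (use meas in simp)
  also have "\<dots> \<le> ennreal b"
  proof (rule SUP_least)
    fix n
    have "integral\<^sup>N lborel (fn n) = ennreal (integral {a..a' + real n} f)"
      unfolding fn_def
      by (rule nn_to_integral) (auto intro: continuous_on_subset[OF cf] nn)
    also have "\<dots> \<le> ennreal b" using bd[of "a' + real n"] by (auto intro: ennreal_leI)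
    finally show "integral\<^sup>N lborel (fn n) \<le> ennreal b" .
  qed
  finally show ?thesis .
qed



lemma amgm: fixes e x y :: real assumes "e > 0" shows "2*\<bar>x\<bar>*\<bar>y\<bar> \<le> e/2*x^2 + 2/e*y^2"
proof -
  have gen: "2*a*b \<le> e/2*a^2 + 2/e*b^2" for a b :: real
  proof -
    have "e/2*a^2 + 2/e*b^2 - 2*a*b = (e*a - 2*b)^2/(2*e)"
      using assms by (simp add: field_simps power2_eq_square)
    moreover have "(e*a - 2*b)^2/(2*e) \<ge> 0" using assms by simp
    ultimately show ?thesis by linarith
  qed
  show ?thesis using gen[of "\<bar>x\<bar>" "\<bar>y\<bar>"] by simp
qed

lemma inner2: fixes e E u w h G :: real
  assumes "E > 0" "0 < u" "u \<le> 1" "e \<le> u*w" "e > 0"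
  shows "e/2*h^2*E \<le> 2/e*G^2*E - (2*h*G*E*u - h^2*E*u*w)"
proof -
  have a: "2*\<bar>h\<bar>*\<bar>G\<bar> \<le> e/2*h^2 + 2/e*G^2" by (rule amgm) fact
  have b: "h*G*u \<le> \<bar>h\<bar>*\<bar>G\<bar>"
  proof -
    have "h*G*u \<le> \<bar>h*G*u\<bar>" by simp
    also have "\<dots> = \<bar>h\<bar>*\<bar>G\<bar>*u" using assms by (simp add: abs_mult)
    also have "\<dots> \<le> \<bar>h\<bar>*\<bar>G\<bar>" using assms by (simp add: mult_left_le)
    finally show ?thesis .
  qed
  have c: "h^2*e \<le> h^2*(u*w)" using assms by (intro mult_left_mono) auto
  have "e/2*h^2 \<le> 2/e*G^2 - (2*h*G*u - h^2*u*w)" using a b c by (simp add: algebra_simps)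
  then have "(e/2*h^2)*E \<le> (2/e*G^2 - (2*h*G*u - h^2*u*w))*E" using assms by (intro mult_right_mono) auto
  then show ?thesis by (simp add: algebra_simps)
qed

lemma outer2: fixes c E q h y :: real
  assumes "E > 0" "c > 0" "c \<le> q"
  shows "c/2*h^2*E \<le> 2/c*y^2*E - (2*h*y*E - h^2*E*q)"
proof -
  have a: "2*\<bar>h\<bar>*\<bar>y\<bar> \<le> c/2*h^2 + 2/c*y^2" by (rule amgm) fact
  have b: "h*y \<le> \<bar>h\<bar>*\<bar>y\<bar>" by (metis abs_ge_self abs_mult)
  have cc: "h^2*c \<le> h^2*q" using assms by (intro mult_left_mono) auto
  have "c/2*h^2 \<le> 2/c*y^2 - (2*h*y - h^2*q)" using a b cc by (simp add: algebra_simps)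
  then have "(c/2*h^2)*E \<le> (2/c*y^2 - (2*h*y - h^2*q))*E" using assms by (intro mult_right_mono) auto
  then show ?thesis by (simp add: algebra_simps)
qed

lemma inner1: fixes e E u w H g :: real
  assumes "E > 0" "0 < u" "u \<le> 1" "e \<le> u*w" "H \<ge> 0" "g \<ge> 0"
  shows "e*H*E \<le> g*E - (g*E*u - H*E*u*w)"
proof -
  have "g*E*u \<le> g*E" using assms by (simp add: mult_left_le)
  moreover have "H*E*e \<le> H*E*(u*w)" using assms by (intro mult_left_mono) auto
  ultimately show ?thesis by (simp add: algebra_simps)
qed

lemma outer1: fixes c E q H y :: real
  assumes "E > 0" "c \<le> q" "H \<ge> 0"
  shows "c*H*E \<le> y*E - (y*E - H*E*q)"
proof -
  have "H*E*c \<le> H*E*q" using assms by (intro mult_left_mono) auto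
  then show ?thesis by (simp add: algebra_simps)
qed


lemma half:
  fixes V D D2 :: "real \<Rightarrow> real" and S c :: real
  assumes dV: "\<And>x. (V has_real_derivative D x) (at x)"
    and dD: "\<And>x. (D has_real_derivative D2 x) (at x)"
    and S0: "S \<ge> 0" and c: "c > 0"
    and pos: "\<And>x. x \<ge> S \<Longrightarrow> D x > 0"
    and rat: "\<And>x. x \<ge> S \<Longrightarrow> c \<le> 1 + D2 x / (D x)^2"
  shows "\<exists>K>0. \<forall>g G. (\<forall>x. (g has_real_derivative G x) (at x)) \<longrightarrow> continuous_on UNIV G \<longrightarrow>
     (\<integral>\<^sup>+x. ennreal ((g x - g 0)^2 * exp (- V x)) * indicator {0..} x \<partial>lborel)
        \<le> ennreal K * (\<integral>\<^sup>+x. ennreal ((G x)^2 * (1 + (if \<bar>x\<bar> > S then 1 else 0)/(D x)^2) * exp (- V x)) * indicator {0..} x \<partial>lborel)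
     \<and> (\<integral>\<^sup>+x. ennreal (\<bar>g x - g 0\<bar> * exp (- V x)) * indicator {0..} x \<partial>lborel)
        \<le> ennreal K * (\<integral>\<^sup>+x. ennreal (\<bar>G x\<bar> * (1 + (if \<bar>x\<bar> > S then 1 else 0)/\<bar>D x\<bar>) * exp (- V x)) * indicator {0..} x \<partial>lborel)"
proof -
  define S1 where "S1 = S + 1"
  have S1: "S1 > S" "S1 > 0" using S0 by (auto simp: S1_def)
  have cV: "continuous_on A V" for A
    using dV by (meson DERIV_isCont continuous_at_imp_continuous_on)
  have cD: "continuous_on A D" for A
    using dD by (meson DERIV_isCont continuous_at_imp_continuous_on)
  obtain M where M: "\<And>x. x \<in> {0..S1} \<Longrightarrow> \<bar>D x\<bar> \<le> M"
  proof -
    have "bounded (D ` {0..S1})" by (intro compact_imp_bounded compact_continuous_image cD compact_Icc)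
    then show ?thesis using that unfolding bounded_iff by (metis atLeastAtMost_iff image_eqI real_norm_def)
  qed
  define B where "B = \<bar>M\<bar> + 1"
  have Bpos: "B > 0" by (simp add: B_def)
  define \<epsilon> where "\<epsilon> = exp (- B * S1)"
  define u where "u x = exp (- B * x)" for x
  define dS where "dS = D S1"
  have dS: "dS > 0" using pos S1 by (simp add: dS_def)
  have eps: "\<epsilon> > 0" by (simp add: \<epsilon>_def)
  have uprops: "\<epsilon> \<le> u x \<and> 0 < u x \<and> u x \<le> 1" if "x \<in> {0..S1}" for x
    using that Bpos by (auto simp: u_def \<epsilon>_def mult_left_mono)
  have uw: "\<epsilon> \<le> u x * (D x + B)" if "x \<in> {0..S1}" for x
  proof -
    have "D x + B \<ge> 1" using M[OF that] by (auto simp: B_def)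
    then have "u x * 1 \<le> u x * (D x + B)" using uprops[OF that] mult_left_mono[of 1 "D x + B" "u x"] by linarith
    then show ?thesis using uprops[OF that] by (metis mult.right_neutral order_trans)
  qed
  have uS1: "u S1 = \<epsilon>" by (simp add: u_def \<epsilon>_def)
  define K2 where "K2 = 4/\<epsilon>^2 + 4/c^2 + 4/(c*\<epsilon>^2*dS)"
  define K1 where "K1 = 1/\<epsilon> + 1/c + 1/(c*\<epsilon>*dS)"
  have K1: "K1 > 0" using eps c dS by (simp add: K1_def add_pos_pos)
  have K2: "K2 > 0" using eps c dS by (simp add: K2_def add_pos_pos)
  show ?thesis
  proof (rule exI[of _ "K1 + K2"], intro conjI allI impI)
    show "K1 + K2 > 0" using K1 K2 by simp
    fix g G assume dg: "\<forall>x. (g has_real_derivative G x) (at x)" and cG: "continuous_on UNIV G"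
    have cG': "continuous_on A G" for A using cG continuous_on_subset by blast
    have cg: "continuous_on A g" for A
      using dg by (meson DERIV_isCont continuous_at_imp_continuous_on)
    define h where "h x = g x - g 0" for x
    define E where "E x = exp (- V x)" for x
    have Epos: "E x > 0" for x by (simp add: E_def)
    have cE: "continuous_on A E" for A unfolding E_def by (intro continuous_intros cV)
    have ch: "continuous_on A h" for A unfolding h_def by (intro continuous_intros cg)
    have dh: "(h has_real_derivative G x) (at x)" for x
      unfolding h_def using dg by (auto intro!: derivative_eq_intros)
    have dE: "(E has_real_derivative (- D x * E x)) (at x)" for x
      unfolding E_def by (rule DERIV_cong, (rule derivative_eq_intros dV)+) auto
    have du: "(u has_real_derivative (- B * u x)) (at x)" for x
      unfolding u_def by (rule DERIV_cong, (rule derivative_eq_intros)+) auto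
    have cu: "continuous_on A u" for A unfolding u_def by (intro continuous_intros)
    define Iin where "Iin = integral {0..S1} (\<lambda>x. h x^2 * E x)"
    define Jin where "Jin = integral {0..S1} (\<lambda>x. G x^2 * E x)"
    have Iin_nn: "Iin \<ge> 0" unfolding Iin_def
      by (rule integral_nonneg_cont) (auto intro!: continuous_intros ch cE simp: Epos less_imp_le)
    have in2: "\<epsilon>/2 * Iin + h S1^2 * E S1 * \<epsilon> \<le> 2/\<epsilon> * Jin"
    proof -
      have "integral {0..S1} (\<lambda>x. \<epsilon>/2 * (h x^2 * E x)) \<le> integral {0..S1} (\<lambda>x. 2/\<epsilon> * (G x^2 * E x))
             + (h 0^2 * E 0 * u 0) - (h S1^2 * E S1 * u S1)"
      proof (rule ftc_bound[where F="\<lambda>x. h x^2 * E x * u x" and F'="\<lambda>x. 2*h x*G x*E x*u x - h x^2*E x*u x*(D x + B)"])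
        show "0 \<le> S1" using S1 by simp
        fix x assume x: "x \<in> {0..S1}"
        have "((\<lambda>x. h x^2 * E x * u x) has_real_derivative 2*h x*G x*E x*u x - h x^2*E x*u x*(D x + B)) (at x)"
          using dh dE du by (intro DERIV_cong[OF DERIV_mult[OF DERIV_mult[OF DERIV_power[OF dh] dE] du]]) (simp add: algebra_simps power2_eq_square)
        then show "((\<lambda>x. h x^2 * E x * u x) has_real_derivative 2*h x*G x*E x*u x - h x^2*E x*u x*(D x + B)) (at x within {0..S1})"
          by (rule has_field_derivative_at_within)
        show "\<epsilon>/2 * (h x^2 * E x) \<le> 2/\<epsilon> * (G x^2 * E x) - (2*h x*G x*E x*u x - h x^2*E x*u x*(D x + B))"
          using inner2[of "E x" "u x" \<epsilon> "D x + B" "h x" "G x"] uprops[OF x] uw[OF x] eps Epos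
          by (simp add: mult.assoc)
      qed (use eps in \<open>auto intro!: continuous_intros ch cE cG'\<close>)
      then show ?thesis using uS1 by (simp add: Iin_def Jin_def h_def)
    qed
    have Dp: "D x > 0" if "x \<ge> S1" for x using pos S1 that by auto
    have Dnz: "D x \<noteq> 0" if "x \<ge> S1" for x using Dp[OF that] by simp
    have out2: "c/2 * integral {S1..T} (\<lambda>x. h x^2 * E x) \<le> 2/c * integral {S1..T} (\<lambda>x. (G x / D x)^2 * E x) + h S1^2 * E S1 / D S1" if T: "T \<ge> S1" for T
    proof -
      have "integral {S1..T} (\<lambda>x. c/2 * (h x^2 * E x)) \<le> integral {S1..T} (\<lambda>x. 2/c * ((G x / D x)^2 * E x)) + h S1^2 * E S1 / D S1 - h T^2 * E T / D T"
      proof (rule ftc_bound[where F="\<lambda>x. h x^2 * E x / D x" and F'="\<lambda>x. 2*h x*(G x/D x)*E x - h x^2*E x*(1 + D2 x/(D x)^2)"])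
        show "S1 \<le> T" by fact
        fix x assume x: "x \<in> {S1..T}"
        then have Dx: "D x > 0" using Dp by auto
        then have Dne: "D x \<noteq> 0" by simp
        have "((\<lambda>x. h x^2 * E x / D x) has_real_derivative 2*h x*(G x/D x)*E x - h x^2*E x*(1 + D2 x/(D x)^2)) (at x)"
          by (rule DERIV_cong[OF DERIV_divide[OF DERIV_mult[OF DERIV_power[OF dh] dE] dD Dne]]) (use Dne in \<open>simp add: field_simps power2_eq_square\<close>)
        then show "((\<lambda>x. h x^2 * E x / D x) has_real_derivative 2*h x*(G x/D x)*E x - h x^2*E x*(1 + D2 x/(D x)^2)) (at x within {S1..T})"
          by (rule has_field_derivative_at_within)
        show "c/2 * (h x^2 * E x) \<le> 2/c * ((G x / D x)^2 * E x) - (2*h x*(G x/D x)*E x - h x^2*E x*(1 + D2 x/(D x)^2))"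
          using outer2[of "E x" c "1 + D2 x/(D x)^2" "h x" "G x / D x"] Epos c rat[of x] x S1
          by (simp add: mult.assoc)
      next
        show "continuous_on {S1..T} (\<lambda>x. 2/c * ((G x / D x)^2 * E x))"
          using Dp by (intro continuous_intros cG' cD cE) (auto, fastforce)
      qed (auto intro!: continuous_intros ch cE)
      moreover have "h T^2 * E T / D T \<ge> 0" using Dp[OF T] Epos[of T] by simp
      ultimately show ?thesis by simp
    qed
    show "(\<integral>\<^sup>+x. ennreal ((g x - g 0)^2 * exp (- V x)) * indicator {0..} x \<partial>lborel)
        \<le> ennreal (K1 + K2) * (\<integral>\<^sup>+x. ennreal ((G x)^2 * (1 + (if \<bar>x\<bar> > S then 1 else 0)/(D x)^2) * exp (- V x)) * indicator {0..} x \<partial>lborel)"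
      (is "_ \<le> _ * ?A")
    proof (cases "?A = \<infinity>")
      case True then show ?thesis using K1 K2 by (simp add: ennreal_mult_top)
    next
      case False
      then obtain a where a: "?A = ennreal a" "a \<ge> 0" by (cases ?A) auto
      define W where "W x = (G x)^2 * (1 + (if \<bar>x\<bar> > S then 1 else 0)/(D x)^2) * E x" for x
      have Wnn: "W x \<ge> 0" for x using Epos[of x] by (simp add: W_def)
      have A': "?A = (\<integral>\<^sup>+x. ennreal (W x) * indicator {0..} x \<partial>lborel)" by (simp add: W_def E_def)
      have Jin: "Jin \<le> a"
      proof -
        have "ennreal Jin = (\<integral>\<^sup>+x. ennreal (G x^2 * E x) * indicator {0..S1} x \<partial>lborel)"
          unfolding Jin_def by (rule nn_to_integral[symmetric]) (auto intro!: continuous_intros cG' cE simp: Epos less_imp_le)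
        also have "\<dots> \<le> ?A" unfolding A'
        proof (rule nn_integral_mono)
          fix x
          have "G x^2 * E x * 1 \<le> G x^2 * E x * (1 + (if \<bar>x\<bar> > S then 1 else 0)/(D x)^2)"
            using Epos[of x] by (intro mult_left_mono) auto
          then have "G x^2 * E x \<le> W x" by (simp add: W_def mult_ac)
          then show "ennreal (G x^2 * E x) * indicator {0..S1} x \<le> ennreal (W x) * indicator {0..} x"
            by (auto simp: indicator_def intro: ennreal_leI)
        qed
        finally show ?thesis using a by simp
      qed
      have Jout: "integral {S1..T} (\<lambda>x. (G x / D x)^2 * E x) \<le> a" if "T \<ge> S1" for T
      proof -
        have "ennreal (integral {S1..T} (\<lambda>x. (G x / D x)^2 * E x)) = (\<integral>\<^sup>+x. ennreal ((G x / D x)^2 * E x) * indicator {S1..T} x \<partial>lborel)"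
          by (rule nn_to_integral[symmetric]) (use Dp in \<open>auto intro!: continuous_intros cG' cE cD simp: Epos less_imp_le Dnz\<close>)
        also have "\<dots> \<le> ?A" unfolding A'
        proof (rule nn_integral_mono)
          fix x
          show "ennreal ((G x / D x)^2 * E x) * indicator {S1..T} x \<le> ennreal (W x) * indicator {0..} x"
          proof (cases "x \<in> {S1..T}")
            case True
            then have "\<bar>x\<bar> > S" "x \<ge> 0" using S1 by auto
            then have "W x = (G x^2 + (G x / D x)^2) * E x" by (simp add: W_def field_simps power_divide)
            moreover have "(G x / D x)^2 * E x \<le> (G x^2 + (G x / D x)^2) * E x"
              using Epos[of x] by (intro mult_right_mono) auto
            ultimately show ?thesis using True \<open>x \<ge> 0\<close> by (auto intro: ennreal_leI)
          qed simp
        qed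
        finally show ?thesis using a by simp
      qed
      have tot: "integral {0..T} (\<lambda>x. h x^2 * E x) \<le> (K1 + K2) * a" if T: "T \<ge> S1" for T
      proof -
        have "integral {0..S1} (\<lambda>x. h x^2 * E x) + integral {S1..T} (\<lambda>x. h x^2 * E x) = integral {0..T} (\<lambda>x. h x^2 * E x)"
          using S1 T by (intro Henstock_Kurzweil_Integration.integral_combine integrable_continuous_interval) (auto intro!: continuous_intros ch cE)
        moreover have "Iin \<le> 4/\<epsilon>^2 * a"
        proof -
          have "Iin = (2/\<epsilon>) * (\<epsilon>/2 * Iin)" using eps by simp
          also have "\<dots> \<le> (2/\<epsilon>) * (2/\<epsilon> * a)"
          proof (intro mult_left_mono)
            have "h S1^2 * E S1 * \<epsilon> \<ge> 0" using eps Epos[of S1] by simp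
            moreover have "2/\<epsilon> * Jin \<le> 2/\<epsilon> * a" using Jin eps by (intro mult_left_mono) auto
            ultimately show "\<epsilon>/2 * Iin \<le> 2/\<epsilon> * a" using in2 by linarith
          qed (use eps in simp)
          also have "\<dots> = 4/\<epsilon>^2 * a" by (simp add: power2_eq_square)
          finally show ?thesis .
        qed
        moreover have hS: "h S1^2 * E S1 \<le> 2/\<epsilon>^2 * a"
        proof -
          have "h S1^2 * E S1 * \<epsilon> \<le> 2/\<epsilon> * a"
            using in2 Iin_nn eps mult_left_mono[OF Jin, of "2/\<epsilon>"] by (smt (verit) mult_nonneg_nonneg zero_le_divide_iff)
          then have "h S1^2 * E S1 \<le> (2/\<epsilon> * a) / \<epsilon>" using eps by (simp add: pos_le_divide_eq)
          then show ?thesis by (simp add: power2_eq_square)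
        qed
        moreover have "integral {S1..T} (\<lambda>x. h x^2 * E x) \<le> 4/c^2 * a + 4/(c*\<epsilon>^2*dS) * a"
        proof -
          have "integral {S1..T} (\<lambda>x. h x^2 * E x) = (2/c) * (c/2 * integral {S1..T} (\<lambda>x. h x^2 * E x))" using c by simp
          also have "\<dots> \<le> (2/c) * (2/c * a + (2/\<epsilon>^2 * a) / dS)"
          proof (intro mult_left_mono)
            have "h S1^2 * E S1 / D S1 \<le> (2/\<epsilon>^2 * a) / dS" using divide_right_mono[OF hS, of dS] dS unfolding dS_def by simp
            then show "c/2 * integral {S1..T} (\<lambda>x. h x^2 * E x) \<le> 2/c * a + (2/\<epsilon>^2 * a) / dS"
              using out2[OF T] mult_left_mono[OF Jout[OF T], of "2/c"] c by (smt (verit) divide_nonneg_pos)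
          qed (use c in simp)
          also have "\<dots> = 4/c^2 * a + 4/(c*\<epsilon>^2*dS) * a" using eps c dS by (simp add: field_simps power2_eq_square)
          finally show ?thesis .
        qed
        ultimately have "integral {0..T} (\<lambda>x. h x^2 * E x) \<le> K2 * a"
          unfolding Iin_def K2_def by (simp add: algebra_simps)
        also have "\<dots> \<le> (K1 + K2) * a" using K1 a by (simp add: mult_right_mono)
        finally show ?thesis .
      qed
      have "(\<integral>\<^sup>+x. ennreal (h x^2 * E x) * indicator {0..} x \<partial>lborel) \<le> ennreal ((K1 + K2) * a)"
        by (rule nn_bound_sup[where a'=S1]) (use S1 tot Epos in \<open>auto intro!: continuous_intros ch cE simp: less_imp_le\<close>)
      also have "\<dots> = ennreal (K1 + K2) * ?A" using a K1 K2 by (simp add: ennreal_mult)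
      finally show ?thesis by (simp add: h_def E_def)
    qed
    define H where "H x = integral {0..x} (\<lambda>t. \<bar>G t\<bar>)" for x
    have cAG: "continuous_on A (\<lambda>t. \<bar>G t\<bar>)" for A by (intro continuous_intros cG')
    have dH: "(H has_real_derivative \<bar>G x\<bar>) (at x within {0..T})" if "x \<in> {0..T}" for x T
      unfolding H_def using integral_has_vector_derivative[OF cAG that]
      by (simp add: has_real_derivative_iff_has_vector_derivative)
    have cH: "continuous_on {0..T} H" for T
      unfolding H_def by (rule indefinite_integral_continuous_1) (rule integrable_continuous_interval[OF cAG])
    have Hnn: "H x \<ge> 0" if "x \<ge> 0" for x
      unfolding H_def by (rule integral_nonneg_cont) (auto intro!: cAG)
    have hH: "\<bar>h x\<bar> \<le> H x" if x0: "x \<ge> 0" for x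
    proof -
      have "(G has_integral (g x - g 0)) {0..x}"
        using x0 dg by (intro fundamental_theorem_of_calculus)
          (auto simp: has_real_derivative_iff_has_vector_derivative[symmetric] intro: has_field_derivative_at_within)
      then have "h x = integral {0..x} G" by (simp add: h_def integral_unique)
      then show ?thesis unfolding H_def
        using integral_norm_bound_integral[of G "{0..x}" "\<lambda>t. \<bar>G t\<bar>"] integrable_continuous_interval[OF cG'] integrable_continuous_interval[OF cAG] by auto
    qed
    define Iin1 where "Iin1 = integral {0..S1} (\<lambda>x. H x * E x)"
    define Jin1 where "Jin1 = integral {0..S1} (\<lambda>x. \<bar>G x\<bar> * E x)"
    have Iin1_nn: "Iin1 \<ge> 0" unfolding Iin1_def
      by (rule integral_nonneg_cont) (auto intro!: continuous_intros cH cE simp: Epos less_imp_le Hnn)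
    have in1: "\<epsilon> * Iin1 + H S1 * E S1 * \<epsilon> \<le> Jin1"
    proof -
      have "integral {0..S1} (\<lambda>x. \<epsilon> * (H x * E x)) \<le> integral {0..S1} (\<lambda>x. \<bar>G x\<bar> * E x)
             + (H 0 * E 0 * u 0) - (H S1 * E S1 * u S1)"
      proof (rule ftc_bound[where F="\<lambda>x. H x * E x * u x" and F'="\<lambda>x. \<bar>G x\<bar>*E x*u x - H x*E x*u x*(D x + B)"])
        show "0 \<le> S1" using S1 by simp
        fix x assume x: "x \<in> {0..S1}"
        have dE': "(E has_real_derivative (- D x * E x)) (at x within {0..S1})"
          by (rule has_field_derivative_at_within[OF dE])
        have du': "(u has_real_derivative (- B * u x)) (at x within {0..S1})"
          by (rule has_field_derivative_at_within[OF du])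
        show "((\<lambda>x. H x * E x * u x) has_real_derivative \<bar>G x\<bar>*E x*u x - H x*E x*u x*(D x + B)) (at x within {0..S1})"
          by (rule DERIV_cong[OF DERIV_mult[OF DERIV_mult[OF dH[OF x] dE'] du']]) (simp add: algebra_simps)
        show "\<epsilon> * (H x * E x) \<le> \<bar>G x\<bar> * E x - (\<bar>G x\<bar>*E x*u x - H x*E x*u x*(D x + B))"
          using inner1[of "E x" "u x" \<epsilon> "D x + B" "H x" "\<bar>G x\<bar>"] uprops[OF x] uw[OF x] Epos Hnn[of x] x
          by (simp add: mult.assoc)
      qed (auto intro!: continuous_intros cH cE cG')
      moreover have "H 0 = 0" by (simp add: H_def)
      ultimately show ?thesis using uS1 by (simp add: Iin1_def Jin1_def)
    qed
    have out1: "c * integral {S1..T} (\<lambda>x. H x * E x) \<le> integral {S1..T} (\<lambda>x. (\<bar>G x\<bar> / D x) * E x) + H S1 * E S1 / D S1" if T: "T \<ge> S1" for T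
    proof -
      have cHT: "continuous_on {S1..T} H" using S1 by (intro continuous_on_subset[OF cH[of T]]) auto
      have "integral {S1..T} (\<lambda>x. c * (H x * E x)) \<le> integral {S1..T} (\<lambda>x. (\<bar>G x\<bar> / D x) * E x) + H S1 * E S1 / D S1 - H T * E T / D T"
      proof (rule ftc_bound[where F="\<lambda>x. H x * E x / D x" and F'="\<lambda>x. \<bar>G x\<bar>/D x*E x - H x*E x*(1 + D2 x/(D x)^2)"])
        show "S1 \<le> T" by fact
        fix x assume x: "x \<in> {S1..T}"
        then have Dx: "D x > 0" using Dp by auto
        then have Dne: "D x \<noteq> 0" by simp
        have x0: "x \<in> {0..T}" using x S1 by auto
        have dH': "(H has_real_derivative \<bar>G x\<bar>) (at x within {S1..T})"
          by (rule DERIV_subset[OF dH[OF x0]]) (use S1 in auto)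
        have dE': "(E has_real_derivative (- D x * E x)) (at x within {S1..T})"
          by (rule has_field_derivative_at_within[OF dE])
        have dD': "(D has_real_derivative D2 x) (at x within {S1..T})"
          by (rule has_field_derivative_at_within[OF dD])
        show "((\<lambda>x. H x * E x / D x) has_real_derivative \<bar>G x\<bar>/D x*E x - H x*E x*(1 + D2 x/(D x)^2)) (at x within {S1..T})"
          by (rule DERIV_cong[OF DERIV_divide[OF DERIV_mult[OF dH' dE'] dD' Dne]]) (use Dne in \<open>simp add: field_simps power2_eq_square\<close>)
        show "c * (H x * E x) \<le> (\<bar>G x\<bar> / D x) * E x - (\<bar>G x\<bar>/D x*E x - H x*E x*(1 + D2 x/(D x)^2))"
          using outer1[of "E x" c "1 + D2 x/(D x)^2" "H x" "\<bar>G x\<bar> / D x"] Epos c rat[of x] x S1 Hnn[of x]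
          by (simp add: mult.assoc)
      next
        show "continuous_on {S1..T} (\<lambda>x. (\<bar>G x\<bar> / D x) * E x)"
          using Dp by (intro continuous_intros cG' cD cE) (auto, fastforce)
      qed (auto intro!: continuous_intros cHT cE)
      moreover have "H T * E T / D T \<ge> 0" using Dp[OF T] Epos[of T] Hnn[of T] S1 T by simp
      ultimately show ?thesis by simp
    qed
    show "(\<integral>\<^sup>+x. ennreal (\<bar>g x - g 0\<bar> * exp (- V x)) * indicator {0..} x \<partial>lborel)
        \<le> ennreal (K1 + K2) * (\<integral>\<^sup>+x. ennreal (\<bar>G x\<bar> * (1 + (if \<bar>x\<bar> > S then 1 else 0)/\<bar>D x\<bar>) * exp (- V x)) * indicator {0..} x \<partial>lborel)"
      (is "_ \<le> _ * ?A")
    proof (cases "?A = \<infinity>")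
      case True then show ?thesis using K1 K2 by (simp add: ennreal_mult_top)
    next
      case False
      then obtain a where a: "?A = ennreal a" "a \<ge> 0" by (cases ?A) auto
      define W where "W x = \<bar>G x\<bar> * (1 + (if \<bar>x\<bar> > S then 1 else 0)/\<bar>D x\<bar>) * E x" for x
      have A': "?A = (\<integral>\<^sup>+x. ennreal (W x) * indicator {0..} x \<partial>lborel)" by (simp add: W_def E_def)
      have Jin: "Jin1 \<le> a"
      proof -
        have "ennreal Jin1 = (\<integral>\<^sup>+x. ennreal (\<bar>G x\<bar> * E x) * indicator {0..S1} x \<partial>lborel)"
          unfolding Jin1_def by (rule nn_to_integral[symmetric]) (auto intro!: continuous_intros cG' cE simp: Epos less_imp_le)
        also have "\<dots> \<le> ?A" unfolding A'
        proof (rule nn_integral_mono)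
          fix x
          have "\<bar>G x\<bar> * E x * 1 \<le> \<bar>G x\<bar> * E x * (1 + (if \<bar>x\<bar> > S then 1 else 0)/\<bar>D x\<bar>)"
            using Epos[of x] by (intro mult_left_mono) auto
          then have "\<bar>G x\<bar> * E x \<le> W x" by (simp add: W_def mult_ac)
          then show "ennreal (\<bar>G x\<bar> * E x) * indicator {0..S1} x \<le> ennreal (W x) * indicator {0..} x"
            by (auto simp: indicator_def intro: ennreal_leI)
        qed
        finally show ?thesis using a by simp
      qed
      have Jout: "integral {S1..T} (\<lambda>x. (\<bar>G x\<bar> / D x) * E x) \<le> a" if "T \<ge> S1" for T
      proof -
        have "ennreal (integral {S1..T} (\<lambda>x. (\<bar>G x\<bar> / D x) * E x)) = (\<integral>\<^sup>+x. ennreal ((\<bar>G x\<bar> / D x) * E x) * indicator {S1..T} x \<partial>lborel)"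
          by (rule nn_to_integral[symmetric]) (use Dp in \<open>auto intro!: continuous_intros cG' cE cD simp: Epos less_imp_le Dnz\<close>)
        also have "\<dots> \<le> ?A" unfolding A'
        proof (rule nn_integral_mono)
          fix x
          show "ennreal ((\<bar>G x\<bar> / D x) * E x) * indicator {S1..T} x \<le> ennreal (W x) * indicator {0..} x"
          proof (cases "x \<in> {S1..T}")
            case True
            then have "\<bar>x\<bar> > S" "x \<ge> 0" "D x > 0" using S1 Dp by auto
            then have "W x = (\<bar>G x\<bar> + \<bar>G x\<bar> / D x) * E x" by (simp add: W_def field_simps)
            moreover have "(\<bar>G x\<bar> / D x) * E x \<le> (\<bar>G x\<bar> + \<bar>G x\<bar> / D x) * E x"
              using Epos[of x] by (intro mult_right_mono) auto
            ultimately show ?thesis using True \<open>x \<ge> 0\<close> by (auto intro: ennreal_leI)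
          qed simp
        qed
        finally show ?thesis using a by simp
      qed
      have tot: "integral {0..T} (\<lambda>x. \<bar>h x\<bar> * E x) \<le> (K1 + K2) * a" if T: "T \<ge> S1" for T
      proof -
        have "integral {0..T} (\<lambda>x. \<bar>h x\<bar> * E x) \<le> integral {0..T} (\<lambda>x. H x * E x)"
          by (intro integral_le integrable_continuous_interval)
             (auto intro!: continuous_intros ch cE cH mult_right_mono hH simp: Epos less_imp_le)
        moreover have "integral {0..S1} (\<lambda>x. H x * E x) + integral {S1..T} (\<lambda>x. H x * E x) = integral {0..T} (\<lambda>x. H x * E x)"
          using S1 T by (intro Henstock_Kurzweil_Integration.integral_combine integrable_continuous_interval) (auto intro!: continuous_intros cH cE)
        moreover have "Iin1 \<le> a / \<epsilon>"
        proof -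
          have "H S1 * E S1 * \<epsilon> \<ge> 0" using eps Epos[of S1] Hnn[of S1] S1 by simp
          then have "\<epsilon> * Iin1 \<le> a" using in1 Jin by linarith
          then show ?thesis using eps by (simp add: pos_le_divide_eq mult.commute)
        qed
        moreover have hS: "H S1 * E S1 \<le> a / \<epsilon>"
        proof -
          have "H S1 * E S1 * \<epsilon> \<le> a"
            using in1 Iin1_nn eps Jin by (smt (verit) mult_nonneg_nonneg)
          then show ?thesis using eps by (simp add: pos_le_divide_eq)
        qed
        moreover have "integral {S1..T} (\<lambda>x. H x * E x) \<le> a / c + a / (c*\<epsilon>*dS)"
        proof -
          have "H S1 * E S1 / D S1 \<le> (a / \<epsilon>) / dS" using divide_right_mono[OF hS, of dS] dS unfolding dS_def by simp
          then have "c * integral {S1..T} (\<lambda>x. H x * E x) \<le> a + (a / \<epsilon>) / dS"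
            using out1[OF T] Jout[OF T] by linarith
          then have "integral {S1..T} (\<lambda>x. H x * E x) \<le> (a + (a / \<epsilon>) / dS) / c"
            using c by (simp add: pos_le_divide_eq mult.commute)
          also have "\<dots> = a / c + a / (c*\<epsilon>*dS)" using eps c dS by (simp add: field_simps)
          finally show ?thesis .
        qed
        ultimately have "integral {0..T} (\<lambda>x. \<bar>h x\<bar> * E x) \<le> K1 * a"
          unfolding Iin1_def K1_def by (simp add: algebra_simps)
        also have "\<dots> \<le> (K1 + K2) * a" using K2 a by (simp add: mult_right_mono)
        finally show ?thesis .
      qed
      have "(\<integral>\<^sup>+x. ennreal (\<bar>h x\<bar> * E x) * indicator {0..} x \<partial>lborel) \<le> ennreal ((K1 + K2) * a)"
        by (rule nn_bound_sup[where a'=S1]) (use S1 tot Epos in \<open>auto intro!: continuous_intros ch cE simp: less_imp_le\<close>)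
      also have "\<dots> = ennreal (K1 + K2) * ?A" using a K1 K2 by (simp add: ennreal_mult)
      finally show ?thesis by (simp add: h_def E_def)
    qed
  qed
qed



lemma concave_tangent:
  fixes V :: "real \<Rightarrow> real"
  assumes cc: "concave_on {R<..} V" and dV: "(V has_real_derivative d) (at x0)"
    and x0: "R < x0" and x: "x0 < x"
  shows "V x \<le> V x0 + d * (x - x0)"
proof -
  have lim: "((\<lambda>h. (V (x0 + h) - V x0) / h) \<longlongrightarrow> d) (at_right 0)"
    using dV unfolding DERIV_def by (rule tendsto_mono[OF at_le, rotated]) simp
  have cv: "convex_on {R<..} (\<lambda>x. - V x)" using cc by (simp add: concave_on_def)
  have ev: "eventually (\<lambda>h. (V x - V x0) / (x - x0) \<le> (V (x0 + h) - V x0) / h) (at_right 0)"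
  proof (rule eventually_mono[OF eventually_at_right_real[of 0 "x - x0"]])
    fix h assume h: "h \<in> {0<..<x - x0}"
    have "((- V x0) - (- V (x0 + h))) / (x0 - (x0 + h)) \<le> ((- V x0) - (- V x)) / (x0 - x)"
      using convex_on_slope_le(1)[OF cv, of x0 x "x0 + h"] x0 x h by auto
    then show "(V x - V x0) / (x - x0) \<le> (V (x0 + h) - V x0) / h"
      using h x by (simp add: field_simps)
  qed (use x in simp)
  have "(V x - V x0) / (x - x0) \<le> d"
    by (rule tendsto_lowerbound[OF lim ev]) simp
  then show ?thesis using x by (simp add: field_simps)
qed



lemma refl_nn:
  fixes f :: "real \<Rightarrow> ennreal"
  assumes [measurable]: "f \<in> borel_measurable borel"
  shows "(\<integral>\<^sup>+x. f x * indicator {..0} x \<partial>lborel) = (\<integral>\<^sup>+x. f (-x) * indicator {0..} x \<partial>lborel)"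
proof -
  have "(\<integral>\<^sup>+x. f x * indicator {..0} x \<partial>lborel) = (\<integral>\<^sup>+x. f x * indicator {..0} x \<partial>(distr lborel borel uminus))"
    by (simp add: lborel_distr_uminus)
  also have "\<dots> = (\<integral>\<^sup>+x. f (-x) * indicator {..0} (-x) \<partial>lborel)"
    by (rule nn_integral_distr) auto
  also have "\<dots> = (\<integral>\<^sup>+x. f (-x) * indicator {0..} x \<partial>lborel)"
    by (intro nn_integral_cong) (auto simp: indicator_def)
  finally show ?thesis .
qed


lemma combine:
  fixes f w :: "real \<Rightarrow> real" and K :: ennreal
  assumes [measurable]: "f \<in> borel_measurable borel" "w \<in> borel_measurable borel"
    and pos: "(\<integral>\<^sup>+x. ennreal (f x) * indicator {0..} x \<partial>lborel) \<le> K * (\<integral>\<^sup>+x. ennreal (w x) * indicator {0..} x \<partial>lborel)"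
    and neg: "(\<integral>\<^sup>+x. ennreal (f (-x)) * indicator {0..} x \<partial>lborel) \<le> K * (\<integral>\<^sup>+x. ennreal (w (-x)) * indicator {0..} x \<partial>lborel)"
  shows "(\<integral>\<^sup>+x. ennreal (f x) \<partial>lborel) \<le> 2 * K * (\<integral>\<^sup>+x. ennreal (w x) \<partial>lborel)"
proof -
  have 1: "(\<integral>\<^sup>+x. ennreal (f x) \<partial>lborel) \<le> (\<integral>\<^sup>+x. ennreal (f x) * indicator {0..} x + ennreal (f x) * indicator {..0} x \<partial>lborel)"
    by (intro nn_integral_mono) (simp add: indicator_def)
  have 2: "(\<integral>\<^sup>+x. ennreal (f x) * indicator {0..} x + ennreal (f x) * indicator {..0} x \<partial>lborel) = (\<integral>\<^sup>+x. ennreal (f x) * indicator {0..} x \<partial>lborel) + (\<integral>\<^sup>+x. ennreal (f x) * indicator {..0} x \<partial>lborel)"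
    by (rule nn_integral_add) auto
  have 3: "(\<integral>\<^sup>+x. ennreal (f x) * indicator {..0} x \<partial>lborel) = (\<integral>\<^sup>+x. ennreal (f (-x)) * indicator {0..} x \<partial>lborel)"
    by (rule refl_nn) measurable
  have 4: "(\<integral>\<^sup>+x. ennreal (w (-x)) * indicator {0..} x \<partial>lborel) = (\<integral>\<^sup>+x. ennreal (w x) * indicator {..0} x \<partial>lborel)"
    by (rule refl_nn[symmetric]) measurable
  have "(\<integral>\<^sup>+x. ennreal (f x) \<partial>lborel) \<le> K * (\<integral>\<^sup>+x. ennreal (w x) * indicator {0..} x \<partial>lborel) + K * (\<integral>\<^sup>+x. ennreal (w x) * indicator {..0} x \<partial>lborel)"
    using order_trans[OF 1[unfolded 2 3] add_mono[OF pos neg]] unfolding 4 .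
  also have "\<dots> \<le> K * (\<integral>\<^sup>+x. ennreal (w x) \<partial>lborel) + K * (\<integral>\<^sup>+x. ennreal (w x) \<partial>lborel)"
    by (intro add_mono mult_left_mono nn_integral_mono) (simp_all add: indicator_def)
  also have "\<dots> = 2 * K * (\<integral>\<^sup>+x. ennreal (w x) \<partial>lborel)"
    by (simp add: mult_2 distrib_right)
  finally show ?thesis .
qed



lemma var_le:
  fixes g :: "real \<Rightarrow> real"
  assumes ps: "prob_space M" and [measurable]: "g \<in> borel_measurable M"
  shows "Var M g \<le> (\<integral>\<^sup>+x. ennreal ((g x - a)^2) \<partial>M)"
proof (cases "(\<integral>\<^sup>+x. ennreal ((g x - a)^2) \<partial>M) = \<infinity>")
  case True then show ?thesis by simp
next
  case False
  interpret prob_space M by (rule ps)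
  define X where "X x = g x - a" for x
  have [measurable]: "X \<in> borel_measurable M" unfolding X_def by measurable
  obtain v where v: "(\<integral>\<^sup>+x. ennreal ((X x)^2) \<partial>M) = ennreal v"
    using False unfolding X_def by (cases "(\<integral>\<^sup>+x. ennreal ((g x - a)^2) \<partial>M)") auto
  have iX2: "integrable M (\<lambda>x. (X x)^2)"
    by (rule integrableI_nn_integral_finite[OF _ _ v]) auto
  have iX: "integrable M X" by (rule square_integrable_imp_integrable) (use iX2 in auto)
  have eq: "g x - integral\<^sup>L M g = X x - expectation X" for x
  proof -
    have "integral\<^sup>L M g = expectation X + a"
    proof -
      have "g = (\<lambda>x. X x + a)" by (simp add: X_def)
      then show ?thesis using iX prob_space by simp
    qed
    then show ?thesis unfolding X_def by simp
  qed
  have iV: "integrable M (\<lambda>x. (X x - expectation X)^2)"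
    using iX iX2 by (simp add: power2_diff)
  have "Var M g = (\<integral>\<^sup>+x. ennreal ((X x - expectation X)^2) \<partial>M)"
    unfolding Var_def eq ..
  also have "\<dots> = ennreal (variance X)"
    by (rule nn_integral_eq_integral[OF iV]) auto
  also have "\<dots> = ennreal (expectation (\<lambda>x. (X x)^2) - (expectation X)^2)"
    using variance_eq[OF iX iX2] by simp
  also have "\<dots> \<le> ennreal (expectation (\<lambda>x. (X x)^2))" by (intro ennreal_leI) simp
  also have "\<dots> = (\<integral>\<^sup>+x. ennreal ((X x)^2) \<partial>M)"
    by (rule nn_integral_eq_integral[OF iX2, symmetric]) auto
  finally show ?thesis by (simp add: X_def)
qed



lemma median_le:
  fixes g :: "real \<Rightarrow> real"
  assumes ps: "prob_space M" and [measurable]: "g \<in> borel_measurable M" and med: "is_median M g m"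
  shows "(\<integral>\<^sup>+x. ennreal \<bar>g x - m\<bar> \<partial>M) \<le> 3 * (\<integral>\<^sup>+x. ennreal \<bar>g x - a\<bar> \<partial>M)"
proof -
  interpret prob_space M by (rule ps)
  let ?X = "(\<integral>\<^sup>+x. ennreal \<bar>g x - a\<bar> \<partial>M)"
  have key: "ennreal \<bar>m - a\<bar> \<le> 2 * ?X"
  proof (cases "m \<ge> a")
    case True
    define A where "A = {x \<in> space M. g x \<ge> m}"
    have A[measurable]: "A \<in> sets M" unfolding A_def by measurable
    have mA: "measure M A \<ge> 1/2" using med by (simp add: is_median_def A_def)
    have "ennreal (m - a) * ennreal (1/2) \<le> ennreal (m - a) * emeasure M A"
      using mA by (intro mult_left_mono) (subst emeasure_eq_measure, rule ennreal_leI[OF mA], simp)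
    also have "\<dots> = (\<integral>\<^sup>+x. ennreal (m - a) * indicator A x \<partial>M)"
      by (simp add: nn_integral_cmult_indicator)
    also have "\<dots> \<le> ?X"
      by (intro nn_integral_mono) (auto simp: A_def indicator_def intro!: ennreal_leI)
    finally have "ennreal (m - a) * ennreal (1/2) \<le> ?X" .
    moreover have "ennreal ((m - a)/2) = ennreal (m - a) * ennreal (1/2)" using True by (subst ennreal_mult[symmetric]) auto
    ultimately have "ennreal ((m - a)/2) \<le> ?X" by simp
    then have "2 * ennreal ((m - a)/2) \<le> 2 * ?X" by (intro mult_left_mono) auto
    moreover have "2 * ennreal ((m - a)/2) = ennreal \<bar>m - a\<bar>"
    proof -
      have "ennreal \<bar>m - a\<bar> = ennreal (2 * ((m - a)/2))" using True by simp
      also have "\<dots> = ennreal 2 * ennreal ((m - a)/2)" using True by (intro ennreal_mult) auto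
      finally show ?thesis by simp
    qed
    ultimately show ?thesis by simp
  next
    case False
    define A where "A = {x \<in> space M. g x \<le> m}"
    have A[measurable]: "A \<in> sets M" unfolding A_def by measurable
    have mA: "measure M A \<ge> 1/2" using med by (simp add: is_median_def A_def)
    have "ennreal (a - m) * ennreal (1/2) \<le> ennreal (a - m) * emeasure M A"
      using mA by (intro mult_left_mono) (subst emeasure_eq_measure, rule ennreal_leI[OF mA], simp)
    also have "\<dots> = (\<integral>\<^sup>+x. ennreal (a - m) * indicator A x \<partial>M)"
      by (simp add: nn_integral_cmult_indicator)
    also have "\<dots> \<le> ?X"
      by (intro nn_integral_mono) (auto simp: A_def indicator_def intro!: ennreal_leI)
    finally have "ennreal (a - m) * ennreal (1/2) \<le> ?X" .
    moreover have "ennreal ((a - m)/2) = ennreal (a - m) * ennreal (1/2)" using False by (subst ennreal_mult[symmetric]) auto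
    ultimately have "ennreal ((a - m)/2) \<le> ?X" by simp
    then have "2 * ennreal ((a - m)/2) \<le> 2 * ?X" by (intro mult_left_mono) auto
    moreover have "2 * ennreal ((a - m)/2) = ennreal \<bar>m - a\<bar>"
    proof -
      have "ennreal \<bar>m - a\<bar> = ennreal (2 * ((a - m)/2))" using False by simp
      also have "\<dots> = ennreal 2 * ennreal ((a - m)/2)" using False by (intro ennreal_mult) auto
      finally show ?thesis by simp
    qed
    ultimately show ?thesis by simp
  qed
  have "(\<integral>\<^sup>+x. ennreal \<bar>g x - m\<bar> \<partial>M) \<le> (\<integral>\<^sup>+x. ennreal \<bar>g x - a\<bar> + ennreal \<bar>m - a\<bar> \<partial>M)"
    by (intro nn_integral_mono) (auto simp flip: ennreal_plus intro!: ennreal_leI)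
  also have "\<dots> = ?X + (\<integral>\<^sup>+x. ennreal \<bar>m - a\<bar> \<partial>M)"
    by (rule nn_integral_add) auto
  also have "(\<integral>\<^sup>+x. ennreal \<bar>m - a\<bar> \<partial>M) = ennreal \<bar>m - a\<bar>"
    by (simp add: emeasure_space_1)
  also have "?X + ennreal \<bar>m - a\<bar> \<le> ?X + 2 * ?X" using key by (rule add_left_mono)
  also have "\<dots> = (1 + 2) * ?X" by (simp only: distrib_right mult_1)
  also have "(1 + 2 :: ennreal) = 3" by simp
  finally show ?thesis .
qed




lemma smooth_d0: "smooth f \<Longrightarrow> (f has_real_derivative deriv f x) (at x)"
  unfolding smooth_def DERIV_deriv_iff_real_differentiable by (metis funpow_0)

lemma smooth_d1: "smooth f \<Longrightarrow> (deriv f has_real_derivative deriv (deriv f) x) (at x)"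
  unfolding smooth_def DERIV_deriv_iff_real_differentiable by (metis funpow_0 funpow_Suc_right o_apply)

lemma smooth_cont: "smooth f \<Longrightarrow> continuous_on A f"
  by (meson DERIV_isCont continuous_at_imp_continuous_on smooth_d0)

lemma smooth_cont_deriv: "smooth f \<Longrightarrow> continuous_on A (deriv f)"
  by (meson DERIV_isCont continuous_at_imp_continuous_on smooth_d1)

theorem mainTheorem7:
  fixes V :: "real \<Rightarrow> real" and R r :: real
  assumes "smooth V"
    and "\<And>x. V (- x) = V x"
    and "prob_space (mu V)"
    and "R > 0"
    and "concave_on {R<..} V"
    and "((\<lambda>x. deriv (deriv V) x / (deriv V x)\<^sup>2) \<longlongrightarrow> r) at_top"
    and "r > - 1/2"
  shows "\<exists>S C. S > R \<and> C > 0 \<and>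
    (\<forall>g. smooth g \<longrightarrow>
      Var (mu V) g \<le> ennreal C * (\<integral>\<^sup>+ x. ennreal ((deriv g x)\<^sup>2 *
          (1 + (if \<bar>x\<bar> > S then 1 else 0) / (deriv V x)\<^sup>2)) \<partial>(mu V))
      \<and> (\<forall>m. is_median (mu V) g m \<longrightarrow>
          (\<integral>\<^sup>+ x. ennreal \<bar>g x - m\<bar> \<partial>(mu V)) \<le> ennreal C * (\<integral>\<^sup>+ x. ennreal (\<bar>deriv g x\<bar> *
          (1 + (if \<bar>x\<bar> > S then 1 else 0) / \<bar>deriv V x\<bar>)) \<partial>(mu V))))"
proof -
  note sV = assms(1) and even = assms(2) and ps = assms(3)
  have dV: "(V has_real_derivative deriv V x) (at x)" for x using smooth_d0[OF sV] .
  have dD: "(deriv V has_real_derivative deriv (deriv V) x) (at x)" for x using smooth_d1[OF sV] .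
  have cV: "continuous_on A V" for A by (rule smooth_cont[OF sV])
  have cDV: "continuous_on A (deriv V)" for A by (rule smooth_cont_deriv[OF sV])
  have mV[measurable]: "V \<in> borel_measurable borel" by (rule borel_measurable_continuous_onI[OF cV])
  have mDV[measurable]: "deriv V \<in> borel_measurable borel" by (rule borel_measurable_continuous_onI[OF cDV])
  have odd: "deriv V (- x) = - deriv V x" for x
  proof -
    have "((\<lambda>x. V (- x)) has_real_derivative deriv V (- x) * (- 1)) (at x)"
      by (rule DERIV_chain2[OF dV]) (auto intro!: derivative_eq_intros)
    moreover have "(\<lambda>x. V (- x)) = V" using even by auto
    ultimately have "(V has_real_derivative - deriv V (- x)) (at x)" by simp
    from DERIV_unique[OF this dV[of x]] show ?thesis by simp
  qed
  have pos: "deriv V x0 > 0" if x0: "x0 > R" for x0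
  proof (rule ccontr)
    assume "\<not> deriv V x0 > 0"
    then have nd: "deriv V x0 \<le> 0" by simp
    have le: "V y \<le> V x0" if "y \<ge> x0" for y
    proof (cases "y = x0")
      case False
      then have "V y \<le> V x0 + deriv V x0 * (y - x0)"
        using concave_tangent[OF assms(5) dV x0] that by auto
      moreover have "deriv V x0 * (y - x0) \<le> 0" using nd that by (simp add: mult_nonpos_nonneg)
      ultimately show ?thesis by simp
    qed simp
    define e where "e = exp (- V x0)"
    have e: "e > 0" by (simp add: e_def)
    define L where "L = 2 / e"
    have L: "L > 0" using e by (simp add: L_def)
    have "emeasure (mu V) UNIV = (\<integral>\<^sup>+x. ennreal (exp (- V x)) * indicator UNIV x \<partial>lborel)"
      unfolding mu_def by (rule emeasure_density) auto
    also have "\<dots> \<ge> (\<integral>\<^sup>+x. ennreal e * indicator {x0..x0+L} x \<partial>lborel)"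
      by (intro nn_integral_mono) (auto simp: indicator_def e_def intro!: ennreal_leI le)
    moreover have "(\<integral>\<^sup>+x. ennreal e * indicator {x0..x0+L} x \<partial>lborel) = ennreal e * ennreal L"
      using L by (simp add: nn_integral_cmult_indicator)
    moreover have "ennreal e * ennreal L = 2"
      using e L by (simp add: ennreal_mult[symmetric] L_def)
    moreover have "emeasure (mu V) UNIV = 1"
      using prob_space.emeasure_space_1[OF ps] by (simp add: mu_def)
    ultimately show False by simp
  qed
  have "-3/4 < r" using assms(7) by simp
  from order_tendstoD(1)[OF assms(6) this]
  obtain N where N: "\<And>x. x \<ge> N \<Longrightarrow> -3/4 < deriv (deriv V) x / (deriv V x)\<^sup>2"
    by (auto simp: eventually_at_top_linorder)
  define S where "S = max N (R + 1)"
  have SR: "S > R" "S \<ge> 0" using assms(4) by (auto simp: S_def)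
  have posS: "deriv V x > 0" if "x \<ge> S" for x using pos that SR by auto
  have ratS: "1/4 \<le> 1 + deriv (deriv V) x / (deriv V x)\<^sup>2" if "x \<ge> S" for x
  proof -
    have "x \<ge> N" using that by (simp add: S_def)
    from N[OF this] show ?thesis by linarith
  qed
  obtain K where K: "K > 0" and KH: "\<And>g G. (\<forall>x. (g has_real_derivative G x) (at x)) \<Longrightarrow> continuous_on UNIV G \<Longrightarrow>
     (\<integral>\<^sup>+x. ennreal ((g x - g 0)^2 * exp (- V x)) * indicator {0..} x \<partial>lborel)
        \<le> ennreal K * (\<integral>\<^sup>+x. ennreal ((G x)^2 * (1 + (if \<bar>x\<bar> > S then 1 else 0)/(deriv V x)^2) * exp (- V x)) * indicator {0..} x \<partial>lborel)
     \<and> (\<integral>\<^sup>+x. ennreal (\<bar>g x - g 0\<bar> * exp (- V x)) * indicator {0..} x \<partial>lborel)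
        \<le> ennreal K * (\<integral>\<^sup>+x. ennreal (\<bar>G x\<bar> * (1 + (if \<bar>x\<bar> > S then 1 else 0)/\<bar>deriv V x\<bar>) * exp (- V x)) * indicator {0..} x \<partial>lborel)"
    using half[OF dV dD SR(2), of "1/4"] posS ratS by auto
  show ?thesis
  proof (rule exI[of _ S], rule exI[of _ "6 * K"], intro conjI allI impI)
    show "S > R" by (rule SR)
    show "6 * K > 0" using K by simp
    fix g :: "real \<Rightarrow> real" assume sg: "smooth g"
    have dg: "\<forall>x. (g has_real_derivative deriv g x) (at x)" using smooth_d0[OF sg] by blast
    have cg: "continuous_on A g" for A by (rule smooth_cont[OF sg])
    have cdg: "continuous_on A (deriv g)" for A by (rule smooth_cont_deriv[OF sg])
    have mg[measurable]: "g \<in> borel_measurable borel" by (rule borel_measurable_continuous_onI[OF cg])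
    have mdg[measurable]: "deriv g \<in> borel_measurable borel" by (rule borel_measurable_continuous_onI[OF cdg])
    define gt where "gt x = g (- x)" for x
    define Gt where "Gt x = - deriv g (- x)" for x
    have dgt: "\<forall>x. (gt has_real_derivative Gt x) (at x)"
    proof
      fix x
      have "((\<lambda>x. g (- x)) has_real_derivative deriv g (- x) * (- 1)) (at x)"
        by (rule DERIV_chain2[OF smooth_d0[OF sg]]) (auto intro!: derivative_eq_intros)
      then show "(gt has_real_derivative Gt x) (at x)" by (simp add: gt_def[abs_def] Gt_def)
    qed
    have cGt: "continuous_on UNIV Gt" unfolding Gt_def by (intro continuous_on_minus continuous_on_compose2[OF cdg[of UNIV]] continuous_intros) auto
    note P = KH[OF dg cdg] and Q = KH[OF dgt cGt]
    have dens: "(\<integral>\<^sup>+x. ennreal (f x) \<partial>(mu V)) = (\<integral>\<^sup>+x. ennreal (f x * exp (- V x)) \<partial>lborel)"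
      if [measurable]: "f \<in> borel_measurable borel" and fnn: "\<And>x. f x \<ge> 0" for f
    proof -
      have "(\<integral>\<^sup>+x. ennreal (f x) \<partial>(mu V)) = (\<integral>\<^sup>+x. ennreal (exp (- V x)) * ennreal (f x) \<partial>lborel)"
        unfolding mu_def by (rule nn_integral_density) auto
      also have "\<dots> = (\<integral>\<^sup>+x. ennreal (f x * exp (- V x)) \<partial>lborel)"
        using fnn by (intro nn_integral_cong) (simp add: ennreal_mult[symmetric] mult.commute)
      finally show ?thesis .
    qed
    have sgn2: "(deriv V (- x))\<^sup>2 = (deriv V x)\<^sup>2" "\<bar>deriv V (- x)\<bar> = \<bar>deriv V x\<bar>" for x
      by (simp_all add: odd)
    define f2 where "f2 x = (g x - g 0)^2 * exp (- V x)" for x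
    define w2 where "w2 x = (deriv g x)^2 * (1 + (if \<bar>x\<bar> > S then 1 else 0)/(deriv V x)^2) * exp (- V x)" for x
    have mf2[measurable]: "f2 \<in> borel_measurable borel" unfolding f2_def by measurable
    have mw2[measurable]: "w2 \<in> borel_measurable borel" unfolding w2_def by measurable
    have C2: "(\<integral>\<^sup>+x. ennreal (f2 x) \<partial>lborel) \<le> 2 * ennreal K * (\<integral>\<^sup>+x. ennreal (w2 x) \<partial>lborel)"
    proof (rule combine[OF mf2 mw2])
      show "(\<integral>\<^sup>+x. ennreal (f2 x) * indicator {0..} x \<partial>lborel) \<le> ennreal K * (\<integral>\<^sup>+x. ennreal (w2 x) * indicator {0..} x \<partial>lborel)"
        using P unfolding f2_def w2_def by simp
      have "(\<integral>\<^sup>+x. ennreal (f2 (-x)) * indicator {0..} x \<partial>lborel) = (\<integral>\<^sup>+x. ennreal ((gt x - gt 0)^2 * exp (- V x)) * indicator {0..} x \<partial>lborel)"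
        by (simp add: f2_def gt_def even)
      also have "\<dots> \<le> ennreal K * (\<integral>\<^sup>+x. ennreal ((Gt x)^2 * (1 + (if \<bar>x\<bar> > S then 1 else 0)/(deriv V x)^2) * exp (- V x)) * indicator {0..} x \<partial>lborel)"
        using Q by simp
      also have "(\<integral>\<^sup>+x. ennreal ((Gt x)^2 * (1 + (if \<bar>x\<bar> > S then 1 else 0)/(deriv V x)^2) * exp (- V x)) * indicator {0..} x \<partial>lborel) = (\<integral>\<^sup>+x. ennreal (w2 (-x)) * indicator {0..} x \<partial>lborel)"
        by (simp add: w2_def Gt_def even sgn2)
      finally show "(\<integral>\<^sup>+x. ennreal (f2 (-x)) * indicator {0..} x \<partial>lborel) \<le> ennreal K * (\<integral>\<^sup>+x. ennreal (w2 (-x)) * indicator {0..} x \<partial>lborel)" .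
    qed
    have K26: "2 * ennreal K \<le> ennreal (6 * K)"
    proof -
      have "ennreal (6 * K) = ennreal 6 * ennreal K" using K by (simp add: ennreal_mult)
      moreover have "2 * ennreal K \<le> ennreal 6 * ennreal K" by (intro mult_right_mono) auto
      ultimately show ?thesis by simp
    qed
    show "Var (mu V) g \<le> ennreal (6 * K) * (\<integral>\<^sup>+ x. ennreal ((deriv g x)\<^sup>2 *
          (1 + (if \<bar>x\<bar> > S then 1 else 0) / (deriv V x)\<^sup>2)) \<partial>(mu V))"
    proof -
      have "Var (mu V) g \<le> (\<integral>\<^sup>+x. ennreal ((g x - g 0)^2) \<partial>(mu V))"
        by (rule var_le[OF ps]) (simp add: mu_def)
      also have "\<dots> = (\<integral>\<^sup>+x. ennreal (f2 x) \<partial>lborel)"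
        by (subst dens) (auto simp: f2_def)
      also have "\<dots> \<le> 2 * ennreal K * (\<integral>\<^sup>+x. ennreal (w2 x) \<partial>lborel)" by (rule C2)
      also have "(\<integral>\<^sup>+x. ennreal (w2 x) \<partial>lborel) = (\<integral>\<^sup>+ x. ennreal ((deriv g x)\<^sup>2 *
          (1 + (if \<bar>x\<bar> > S then 1 else 0) / (deriv V x)\<^sup>2)) \<partial>(mu V))"
        by (subst dens) (auto simp: w2_def)
      also have "2 * ennreal K * \<dots> \<le> ennreal (6 * K) * \<dots>" by (intro mult_right_mono K26) auto
      finally show ?thesis .
    qed
    define f1 where "f1 x = \<bar>g x - g 0\<bar> * exp (- V x)" for x
    define w1 where "w1 x = \<bar>deriv g x\<bar> * (1 + (if \<bar>x\<bar> > S then 1 else 0)/\<bar>deriv V x\<bar>) * exp (- V x)" for x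
    have mf1[measurable]: "f1 \<in> borel_measurable borel" unfolding f1_def by measurable
    have mw1[measurable]: "w1 \<in> borel_measurable borel" unfolding w1_def by measurable
    have C1: "(\<integral>\<^sup>+x. ennreal (f1 x) \<partial>lborel) \<le> 2 * ennreal K * (\<integral>\<^sup>+x. ennreal (w1 x) \<partial>lborel)"
    proof (rule combine[OF mf1 mw1])
      show "(\<integral>\<^sup>+x. ennreal (f1 x) * indicator {0..} x \<partial>lborel) \<le> ennreal K * (\<integral>\<^sup>+x. ennreal (w1 x) * indicator {0..} x \<partial>lborel)"
        using P unfolding f1_def w1_def by simp
      have "(\<integral>\<^sup>+x. ennreal (f1 (-x)) * indicator {0..} x \<partial>lborel) = (\<integral>\<^sup>+x. ennreal (\<bar>gt x - gt 0\<bar> * exp (- V x)) * indicator {0..} x \<partial>lborel)"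
        by (simp add: f1_def gt_def even)
      also have "\<dots> \<le> ennreal K * (\<integral>\<^sup>+x. ennreal (\<bar>Gt x\<bar> * (1 + (if \<bar>x\<bar> > S then 1 else 0)/\<bar>deriv V x\<bar>) * exp (- V x)) * indicator {0..} x \<partial>lborel)"
        using Q by simp
      also have "(\<integral>\<^sup>+x. ennreal (\<bar>Gt x\<bar> * (1 + (if \<bar>x\<bar> > S then 1 else 0)/\<bar>deriv V x\<bar>) * exp (- V x)) * indicator {0..} x \<partial>lborel) = (\<integral>\<^sup>+x. ennreal (w1 (-x)) * indicator {0..} x \<partial>lborel)"
        by (simp add: w1_def Gt_def even sgn2)
      finally show "(\<integral>\<^sup>+x. ennreal (f1 (-x)) * indicator {0..} x \<partial>lborel) \<le> ennreal K * (\<integral>\<^sup>+x. ennreal (w1 (-x)) * indicator {0..} x \<partial>lborel)" .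
    qed
    fix m assume med: "is_median (mu V) g m"
    show "(\<integral>\<^sup>+ x. ennreal \<bar>g x - m\<bar> \<partial>(mu V)) \<le> ennreal (6 * K) * (\<integral>\<^sup>+ x. ennreal (\<bar>deriv g x\<bar> *
          (1 + (if \<bar>x\<bar> > S then 1 else 0) / \<bar>deriv V x\<bar>)) \<partial>(mu V))"
    proof -
      have "(\<integral>\<^sup>+ x. ennreal \<bar>g x - m\<bar> \<partial>(mu V)) \<le> 3 * (\<integral>\<^sup>+x. ennreal \<bar>g x - g 0\<bar> \<partial>(mu V))"
        by (rule median_le[OF ps _ med]) (simp add: mu_def)
      also have "(\<integral>\<^sup>+x. ennreal \<bar>g x - g 0\<bar> \<partial>(mu V)) = (\<integral>\<^sup>+x. ennreal (f1 x) \<partial>lborel)"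
        by (subst dens) (auto simp: f1_def)
      also have "3 * \<dots> \<le> 3 * (2 * ennreal K * (\<integral>\<^sup>+x. ennreal (w1 x) \<partial>lborel))" by (intro mult_left_mono C1) auto
      also have "(\<integral>\<^sup>+x. ennreal (w1 x) \<partial>lborel) = (\<integral>\<^sup>+ x. ennreal (\<bar>deriv g x\<bar> *
          (1 + (if \<bar>x\<bar> > S then 1 else 0) / \<bar>deriv V x\<bar>)) \<partial>(mu V))"
        by (subst dens) (auto simp: w1_def)
      also have "3 * (2 * ennreal K * \<dots>) = ennreal (6 * K) * \<dots>"
      proof -
        have "ennreal (6 * K) = 6 * ennreal K" using K by (simp add: ennreal_mult)
        then show ?thesis by (simp add: mult.assoc[symmetric])
      qed
      finally show ?thesis .
    qed
  qed
qed


end
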